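(* Let $d\ge 1$ be an integer. For each $i\in[d]$ let $x^i=(x^i_1,x^i_2,x^i_3)\in\mathbb{R}^3$ with $x^i_1<x^i_2<x^i_3$, and for each $\mathbf t=(t_1,\dots,t_d)\in[3]^d$ let $z_{\mathbf t}\in\mathbb{R}^{d-1}$. Put $P_{\mathbf t}:=(x^1_{t_1},\dots,x^d_{t_d},z_{\mathbf t})\in\mathbb{R}^{2d-1}$ and, for $i\in[d]$ and $j\in[3]$, define $A^i_j:=\operatorname{conv}\{P_{\mathbf t}: \mathbf t\in[3]^d,\ t_i=j\}$. Then there exist an index $i\in[d]$ and a line $\ell\subset\mathbb{R}^{2d-1}$ such that every point $p\in\ell$ satisfies $p_k=x^k_2$ for all $k\in[d]\setminus\{i\}$ (where $p_k$ is the $k$-th coordinate of $p$), and $\ell$ intersects each of $A^i_1,A^i_2,A^i_3$.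
   Context: $[d]=\{1,\dots,d\}$, $[3]=\{1,2,3\}$. *)

theory Defs
  imports "HOL-Analysis.Analysis" "HOL-Library.FuncSet"
begin

text \<open>Points of R^n are represented as functions nat => real that vanish
  outside the coordinate index set {1..n}.\<close>
definition Rn :: "nat \<Rightarrow> (nat \<Rightarrow> real) set" where
  "Rn n = {p. \<forall>k. k \<notin> {1..n} \<longrightarrow> p k = 0}"

definition conv :: "(nat \<Rightarrow> real) set \<Rightarrow> (nat \<Rightarrow> real) set" where
  "conv S = {p. \<exists>F w. finite F \<and> F \<noteq> {} \<and> F \<subseteq> S \<and> (\<forall>q\<in>F. 0 \<le> w q)
      \<and> sum w F = 1 \<and> p = (\<lambda>k. \<Sum>q\<in>F. w q * q k)}"

text \<open>The line through a with direction v (v nonzero is required separately).\<close>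
definition line :: "(nat \<Rightarrow> real) \<Rightarrow> (nat \<Rightarrow> real) \<Rightarrow> (nat \<Rightarrow> real) set" where
  "line a v = {(\<lambda>k. a k + s * v k) | s. True}"

definition tuples :: "nat \<Rightarrow> (nat \<Rightarrow> nat) set" where
  "tuples d = PiE {1..d} (\<lambda>_. {1..3})"

definition Ppt :: "nat \<Rightarrow> (nat \<Rightarrow> nat \<Rightarrow> real) \<Rightarrow> ((nat \<Rightarrow> nat) \<Rightarrow> nat \<Rightarrow> real)
    \<Rightarrow> (nat \<Rightarrow> nat) \<Rightarrow> (nat \<Rightarrow> real)" where
  "Ppt d x z t = (\<lambda>k. if 1 \<le> k \<and> k \<le> d then x k (t k)
                     else if d < k \<and> k \<le> 2 * d - 1 then z t (k - d) else 0)"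

definition Aset :: "nat \<Rightarrow> (nat \<Rightarrow> nat \<Rightarrow> real) \<Rightarrow> ((nat \<Rightarrow> nat) \<Rightarrow> nat \<Rightarrow> real)
    \<Rightarrow> nat \<Rightarrow> nat \<Rightarrow> (nat \<Rightarrow> real) set" where
  "Aset d x z i j = conv (Ppt d x z ` {t \<in> tuples d. t i = j})"

end

theory Submission
  imports Defs
begin


lemma conv_single: "p \<in> S \<Longrightarrow> p \<in> conv S"
  unfolding conv_def
  by (rule CollectI, rule exI[of _ "{p}"], rule exI[of _ "\<lambda>_. 1"]) auto

lemma conv_comb:
  assumes "finite I" "\<forall>i\<in>I. 0 \<le> w i" "sum w I = 1" "\<forall>i\<in>I. p i \<in> conv S"
  shows "(\<lambda>k. \<Sum>i\<in>I. w i * p i k) \<in> conv S"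
proof -
  define P where "P i F W \<longleftrightarrow> finite F \<and> F \<noteq> {} \<and> F \<subseteq> S \<and> (\<forall>q\<in>F. 0 \<le> W q)
      \<and> sum W F = 1 \<and> p i = (\<lambda>k. \<Sum>q\<in>F. W q * q k)" for i F and W :: "(nat \<Rightarrow> real) \<Rightarrow> real"
  have ex: "\<exists>F W. P i F W" if "i \<in> I" for i
    using assms(4) that unfolding P_def conv_def by blast
  define F where "F i = (SOME F. \<exists>W. P i F W)" for i
  define W where "W i = (SOME W. P i (F i) W)" for i
  have PFW: "P i (F i) (W i)" if "i \<in> I" for i
  proof -
    have "\<exists>W. P i (F i) W" unfolding F_def by (rule someI_ex) (rule ex[OF that])
    then show ?thesis unfolding W_def by (rule someI_ex)
  qed
  have FW: "finite (F i) \<and> F i \<noteq> {} \<and> F i \<subseteq> S \<and> (\<forall>q\<in>F i. 0 \<le> W i q)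
      \<and> sum (W i) (F i) = 1 \<and> p i = (\<lambda>k. \<Sum>q\<in>F i. W i q * q k)" if "i \<in> I" for i
    using PFW[OF that] unfolding P_def .
  define G where "G = (\<Union>i\<in>I. F i)"
  define Wt where "Wt q = (\<Sum>i\<in>I. w i * (if q \<in> F i then W i q else 0))" for q
  have finG: "finite G" using FW assms(1) by (auto simp: G_def)
  have Inz: "I \<noteq> {}" using assms(3) by auto
  then obtain i0 where "i0 \<in> I" by auto
  hence Gne: "G \<noteq> {}" using FW by (auto simp: G_def)
  have GS: "G \<subseteq> S" using FW by (auto simp: G_def)
  have key: "(\<Sum>q\<in>G. Wt q * g q) = (\<Sum>i\<in>I. w i * (\<Sum>q\<in>F i. W i q * g q))" for g :: "(nat \<Rightarrow> real) \<Rightarrow> real"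
  proof -
    have "(\<Sum>q\<in>G. Wt q * g q) = (\<Sum>q\<in>G. \<Sum>i\<in>I. w i * ((if q \<in> F i then W i q else 0) * g q))"
      by (simp add: Wt_def sum_distrib_right mult.assoc)
    also have "\<dots> = (\<Sum>i\<in>I. \<Sum>q\<in>G. w i * ((if q \<in> F i then W i q else 0) * g q))"
      by (rule sum.swap)
    also have "\<dots> = (\<Sum>i\<in>I. w i * (\<Sum>q\<in>F i. W i q * g q))"
    proof (rule sum.cong[OF refl])
      fix i assume i: "i \<in> I"
      have sub: "F i \<subseteq> G" using i by (auto simp: G_def)
      have "(\<Sum>q\<in>G. (if q \<in> F i then W i q else 0) * g q) = (\<Sum>q\<in>G. if q \<in> F i then W i q * g q else 0)"
        by (rule sum.cong) auto
      also have "\<dots> = (\<Sum>q\<in>G \<inter> F i. W i q * g q)"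
        by (rule sum.inter_restrict[symmetric]) (rule finG)
      also have "G \<inter> F i = F i" using sub by auto
      finally have eq: "(\<Sum>q\<in>G. (if q \<in> F i then W i q else 0) * g q) = (\<Sum>q\<in>F i. W i q * g q)" .
      show "(\<Sum>q\<in>G. w i * ((if q \<in> F i then W i q else 0) * g q)) = w i * (\<Sum>q\<in>F i. W i q * g q)"
        by (simp only: sum_distrib_left[symmetric] eq)
    qed
    finally show ?thesis .
  qed
  have "sum Wt G = 1"
    using key[of "\<lambda>_. 1"] FW assms(3) by simp
  moreover have "\<forall>q\<in>G. 0 \<le> Wt q"
    using FW assms(2) by (auto simp: Wt_def intro!: sum_nonneg)
  moreover have "(\<lambda>k. \<Sum>i\<in>I. w i * p i k) = (\<lambda>k. \<Sum>q\<in>G. Wt q * q k)"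
  proof
    fix k show "(\<Sum>i\<in>I. w i * p i k) = (\<Sum>q\<in>G. Wt q * q k)"
      using key[of "\<lambda>q. q k"] FW by (auto intro!: sum.cong)
  qed
  ultimately show ?thesis unfolding conv_def using finG Gne GS by blast
qed

lemma conv_trans: "Y \<subseteq> conv X \<Longrightarrow> conv Y \<subseteq> conv X"
proof
  fix p assume Y: "Y \<subseteq> conv X" and "p \<in> conv Y"
  from \<open>p \<in> conv Y\<close> have "\<exists>F w. finite F \<and> F \<noteq> {} \<and> F \<subseteq> Y \<and> (\<forall>q\<in>F. 0 \<le> w q) \<and> sum w F = 1 \<and> p = (\<lambda>k. \<Sum>q\<in>F. w q * q k)"
    unfolding conv_def by (rule CollectD)
  then obtain F w where F: "finite F" "F \<noteq> {}" "F \<subseteq> Y" "\<forall>q\<in>F. 0 \<le> w q"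
    "sum w F = 1" "p = (\<lambda>k. \<Sum>q\<in>F. w q * q k)"
    by (elim exE conjE) (rule that; assumption)
  show "p \<in> conv X" unfolding F(6)
    using conv_comb[of F w "\<lambda>q. q" X] F Y by auto
qed

lemma idx_conv:
  assumes "finite A" "\<forall>a\<in>A. 0 \<le> g a" "sum g A = 1"
  shows "(\<lambda>k. \<Sum>a\<in>A. g a * u a k) \<in> conv (u ` A)"
  using conv_comb[of A g "u" "u ` A"] assms conv_single by auto

lemma conv_idx:
  assumes "v \<in> conv (u ` A)" "finite A"
  shows "\<exists>g. (\<forall>a\<in>A. 0 \<le> g a) \<and> sum g A = 1 \<and> (\<forall>k. (\<Sum>a\<in>A. g a * u a k) = v k)"
proof -
  have "\<exists>F w. finite F \<and> F \<noteq> {} \<and> F \<subseteq> u ` A \<and> (\<forall>q\<in>F. 0 \<le> w q) \<and> sum w F = 1 \<and> v = (\<lambda>k. \<Sum>q\<in>F. w q * q k)"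
    using assms(1) unfolding conv_def by (rule CollectD)
  then obtain F w where F: "finite F" "F \<noteq> {}" "F \<subseteq> u ` A" "\<forall>q\<in>F. 0 \<le> w q"
    "sum w F = 1" "v = (\<lambda>k. \<Sum>q\<in>F. w q * q k)"
    by (elim exE conjE) (rule that; assumption)
  define h where "h q = (SOME a. a \<in> A \<and> u a = q)" for q
  have h: "h q \<in> A \<and> u (h q) = q" if "q \<in> F" for q
  proof -
    have "q \<in> u ` A" using F(3) that by (rule subsetD)
    then have "\<exists>a. a \<in> A \<and> u a = q" unfolding image_iff by (elim bexE) (rule exI, rule conjI, assumption, rule sym)
    then show ?thesis unfolding h_def by (rule someI_ex[of "\<lambda>a. a \<in> A \<and> u a = q"])
  qed
  have inj: "inj_on h F"
  proof (rule inj_onI)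
    fix q q' assume q: "q \<in> F" and q': "q' \<in> F" and e: "h q = h q'"
    have "q = u (h q)" using conjunct2[OF h[OF q]] by (rule sym)
    also have "\<dots> = u (h q')" using e by (rule arg_cong)
    also have "\<dots> = q'" using h[OF q'] by (rule conjunct2)
    finally show "q = q'" .
  qed
  define g where "g a = (if a \<in> h ` F then w (u a) else 0)" for a
  have sub: "h ` F \<subseteq> A"
  proof
    fix a assume "a \<in> h ` F"
    then obtain q where "q \<in> F" "a = h q" by (elim imageE)
    then show "a \<in> A" using h by simp
  qed
  have S: "(\<Sum>a\<in>A. g a * f (u a)) = (\<Sum>q\<in>F. w q * f q)" for f :: "(nat \<Rightarrow> real) \<Rightarrow> real"
  proof -
    have "(\<Sum>a\<in>A. g a * f (u a)) = (\<Sum>a\<in>h ` F. g a * f (u a))"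
      by (rule sum.mono_neutral_right[OF assms(2) sub]) (simp add: g_def)
    also have "\<dots> = (\<Sum>q\<in>F. g (h q) * f (u (h q)))" by (rule sum.reindex[OF inj, unfolded comp_def])
    also have "\<dots> = (\<Sum>q\<in>F. w q * f q)"
    proof (rule sum.cong[OF refl])
      fix q assume q: "q \<in> F"
      have "h q \<in> h ` F" using q by blast
      then show "g (h q) * f (u (h q)) = w q * f q" using h[OF q] by (simp add: g_def)
    qed
    finally show ?thesis .
  qed
  have "sum g A = 1" using S[of "\<lambda>_. 1"] F(5) by simp
  moreover have "\<forall>a\<in>A. 0 \<le> g a"
  proof
    fix a assume "a \<in> A"
    show "0 \<le> g a"
    proof (cases "a \<in> h ` F")
      case True
      then obtain q where q: "q \<in> F" "a = h q" by blast
      then show ?thesis using F(4) h[OF q(1)] by (simp add: g_def)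
    qed (simp add: g_def)
  qed
  moreover have "\<forall>k. (\<Sum>a\<in>A. g a * u a k) = v k"
  proof
    fix k show "(\<Sum>a\<in>A. g a * u a k) = v k" using S[of "\<lambda>q. q k"] F(6) by simp
  qed
  ultimately show ?thesis by blast
qed



lemma dep_lemma:
  assumes "finite K"
  shows "finite I \<Longrightarrow> card K < card I \<Longrightarrow> (\<forall>i\<in>I. \<forall>k. k \<notin> K \<longrightarrow> y i k = 0) \<Longrightarrow>
    \<exists>c. (\<exists>i\<in>I. c i \<noteq> (0::real)) \<and> (\<forall>k. (\<Sum>i\<in>I. c i * y i k) = 0)"
  using assms
proof (induction K arbitrary: I y rule: finite_induct)
  case empty
  then have "I \<noteq> {}" by auto
  then show ?case using empty by (intro exI[of _ "\<lambda>_. 1"]) auto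
next
  case (insert m K)
  show ?case
  proof (cases "\<forall>i\<in>I. y i m = 0")
    case True
    have "\<forall>i\<in>I. \<forall>k. k \<notin> K \<longrightarrow> y i k = 0"
    proof (intro ballI allI impI)
      fix i k assume "i \<in> I" "k \<notin> K"
      then show "y i k = 0" using True insert.prems(3) by (cases "k = m") auto
    qed
    moreover have "card K < card I" using insert by simp
    ultimately show ?thesis using insert.IH insert.prems(1) by blast
  next
    case False
    then obtain i0 where i0: "i0 \<in> I" "y i0 m \<noteq> 0" by auto
    define I' where "I' = I - {i0}"
    define y' where "y' i = (\<lambda>k. y i k - (y i m / y i0 m) * y i0 k)" for i
    have "card I' = card I - 1" using i0 insert.prems(1) by (simp add: I'_def)
    hence cI: "card K < card I'" using insert by simp
    have fI: "finite I'" using insert.prems(1) by (simp add: I'_def)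
    have "\<forall>i\<in>I'. \<forall>k. k \<notin> K \<longrightarrow> y' i k = 0"
    proof (intro ballI allI impI)
      fix i k assume i: "i \<in> I'" and k: "k \<notin> K"
      show "y' i k = 0"
      proof (cases "k = m")
        case True then show ?thesis using i0 by (simp add: y'_def)
      next
        case False
        hence "y i k = 0" "y i0 k = 0" using insert.prems(3) i i0 k by (auto simp: I'_def)
        then show ?thesis by (simp add: y'_def)
      qed
    qed
    then obtain c' where c': "\<exists>i\<in>I'. c' i \<noteq> 0" "\<forall>k. (\<Sum>i\<in>I'. c' i * y' i k) = 0"
      using insert.IH[OF fI cI] by blast
    define c where "c = c'(i0 := - (\<Sum>i\<in>I'. c' i * y i m) / y i0 m)"
    have "\<exists>i\<in>I. c i \<noteq> 0" using c'(1) by (auto simp: c_def I'_def)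
    moreover have "(\<Sum>i\<in>I. c i * y i k) = 0" for k
    proof -
      have e: "(\<Sum>i\<in>I'. c' i * y' i k) = (\<Sum>i\<in>I'. c' i * y i k) - (\<Sum>i\<in>I'. c' i * y i m) / y i0 m * y i0 k"
        by (simp add: y'_def right_diff_distrib sum_subtractf sum_distrib_right sum_divide_distrib mult.assoc)
      have "(\<Sum>i\<in>I. c i * y i k) = c i0 * y i0 k + (\<Sum>i\<in>I'. c i * y i k)"
        using i0 insert.prems(1) by (simp add: I'_def sum.remove)
      also have "(\<Sum>i\<in>I'. c i * y i k) = (\<Sum>i\<in>I'. c' i * y i k)"
        by (rule sum.cong) (auto simp: c_def I'_def)
      finally show ?thesis using e c'(2) by (simp add: c_def)
    qed
    ultimately show ?thesis by blast
  qed
qed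

lemma gordan:
  assumes "finite K"
  shows "finite X \<Longrightarrow> (\<forall>x\<in>X. \<forall>k. k \<notin> K \<longrightarrow> x k = 0) \<Longrightarrow>
    (\<lambda>_. 0) \<in> conv X \<or> (\<exists>y. \<forall>x\<in>X. 0 < (\<Sum>k\<in>K. y k * x k))"
  using assms
proof (induction K arbitrary: X rule: finite_induct)
  case empty
  show ?case
  proof (cases "X = {}")
    case True then show ?thesis by auto
  next
    case False
    then obtain x where "x \<in> X" by auto
    moreover have "x = (\<lambda>_. 0)" using empty calculation by auto
    ultimately show ?thesis using conv_single by metis
  qed
next
  case (insert m K)
  define Xp where "Xp = {x\<in>X. x m > 0}"
  define Xn where "Xn = {x\<in>X. x m < 0}"
  define X0 where "X0 = {x\<in>X. x m = 0}"
  define cc where "cc p q = (\<lambda>k. (- q m / (p m - q m)) * p k + (p m / (p m - q m)) * q k)" for p q :: "nat \<Rightarrow> real"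
  define Y where "Y = X0 \<union> (\<lambda>(p,q). cc p q) ` (Xp \<times> Xn)"
  have fin: "finite Xp" "finite Xn" "finite X0" using insert.prems(1) by (auto simp: Xp_def Xn_def X0_def)
  hence fY: "finite Y" by (simp add: Y_def)
  have Ysupp: "\<forall>x\<in>Y. \<forall>k. k \<notin> K \<longrightarrow> x k = 0"
  proof (intro ballI allI impI)
    fix x k assume x: "x \<in> Y" and k: "k \<notin> K"
    show "x k = 0"
    proof (cases "k = m")
      case True
      then show ?thesis using x unfolding Y_def X0_def cc_def Xp_def Xn_def
        by (auto simp: field_simps)
    next
      case False
      have hk: "\<And>x. x\<in>X \<Longrightarrow> x k = 0" using k False insert.prems(2) by auto
      show ?thesis using x unfolding Y_def X0_def cc_def Xp_def Xn_def
        by (auto simp: hk)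
    qed
  qed
  have YX: "Y \<subseteq> conv X"
  proof
    fix y assume "y \<in> Y"
    then consider "y \<in> X0" | p q where "p \<in> Xp" "q \<in> Xn" "y = cc p q" unfolding Y_def by auto
    then show "y \<in> conv X"
    proof cases
      case 1 then show ?thesis using conv_single by (auto simp: X0_def)
    next
      case 2
      have pq: "p \<noteq> q" using 2 by (auto simp: Xp_def Xn_def)
      have pos: "p m - q m > 0" using 2 by (auto simp: Xp_def Xn_def)
      define w where "w r = (if r = p then - q m / (p m - q m) else p m / (p m - q m))" for r
      have "finite {p, q}" "{p,q} \<noteq> {}" "{p, q} \<subseteq> X" using 2 by (auto simp: Xp_def Xn_def)
      moreover have "\<forall>r\<in>{p,q}. 0 \<le> w r" using 2 pos by (auto simp: w_def Xp_def Xn_def intro!: divide_nonpos_pos)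
      moreover have "sum w {p,q} = 1"
      proof -
        have "sum w {p,q} = - q m / (p m - q m) + p m / (p m - q m)" using pq by (simp add: w_def)
        also have "\<dots> = (p m - q m) / (p m - q m)" by (simp add: diff_divide_distrib[symmetric] add_divide_distrib[symmetric])
        finally show ?thesis using pos by simp
      qed
      moreover have "y = (\<lambda>k. \<Sum>r\<in>{p,q}. w r * r k)" using pq 2 by (simp add: w_def cc_def)
      ultimately show ?thesis unfolding conv_def by blast
    qed
  qed
  from insert.IH[OF fY Ysupp]
  show ?case
  proof
    assume "(\<lambda>_. 0) \<in> conv Y"
    then show ?thesis using conv_trans[OF YX] by blast
  next
    assume "\<exists>y. \<forall>x\<in>Y. 0 < (\<Sum>k\<in>K. y k * x k)"
    then obtain y where y: "\<forall>x\<in>Y. 0 < (\<Sum>k\<in>K. y k * x k)" by blast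
    define s where "s x = (\<Sum>k\<in>K. y k * x k)" for x :: "nat \<Rightarrow> real"
    have key: "- s p / p m < - s q / q m" if p: "p \<in> Xp" and q: "q \<in> Xn" for p q
    proof -
      have pm: "p m > 0" and qm: "q m < 0" using p q by (auto simp: Xp_def Xn_def)
      have "cc p q \<in> Y" using p q by (auto simp: Y_def)
      hence "0 < s (cc p q)" using y by (simp add: s_def)
      also have "s (cc p q) = (\<Sum>k\<in>K. (- q m / (p m - q m)) * (y k * p k) + (p m / (p m - q m)) * (y k * q k))"
        unfolding s_def cc_def by (rule sum.cong) (simp_all add: algebra_simps)
      also have "\<dots> = (- q m / (p m - q m)) * s p + (p m / (p m - q m)) * s q"
        by (simp only: sum.distrib sum_distrib_left s_def)
      also have "\<dots> = (- q m * s p + p m * s q) / (p m - q m)"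
        by (simp only: times_divide_eq_left add_divide_distrib)
      finally have "0 < (- q m * s p + p m * s q) / (p m - q m)" .
      hence "0 < - q m * s p + p m * s q" using pm qm by (simp add: zero_less_divide_iff)
      then show ?thesis using pm qm by (simp add: field_simps)
    qed
    define L where "L = Max ((\<lambda>p. - s p / p m) ` Xp)"
    define U where "U = Min ((\<lambda>q. - s q / q m) ` Xn)"
    have Lge: "- s p / p m \<le> L" if "p \<in> Xp" for p
      unfolding L_def by (rule Max_ge) (use fin that in auto)
    have Ule: "U \<le> - s q / q m" if "q \<in> Xn" for q
      unfolding U_def by (rule Min_le) (use fin that in auto)
    have LU: "L < U" if a: "Xp \<noteq> {}" "Xn \<noteq> {}"
    proof -
      have "L \<in> (\<lambda>p. - s p / p m) ` Xp" unfolding L_def by (rule Max_in) (use fin a in auto)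
      then obtain p0 where p0: "p0 \<in> Xp" "L = - s p0 / p0 m" by auto
      have "U \<in> (\<lambda>q. - s q / q m) ` Xn" unfolding U_def by (rule Min_in) (use fin a in auto)
      then obtain q0 where q0: "q0 \<in> Xn" "U = - s q0 / q0 m" by auto
      show ?thesis using key[OF p0(1) q0(1)] p0 q0 by simp
    qed
    define t where "t = (if Xp = {} then (if Xn = {} then 0 else U - 1) else (if Xn = {} then L + 1 else (L + U) / 2))"
    have tL: "- s p / p m < t" if p: "p \<in> Xp" for p
    proof -
      have "Xp \<noteq> {}" using p by auto
      show ?thesis
      proof (cases "Xn = {}")
        case True then show ?thesis using Lge[OF p] \<open>Xp \<noteq> {}\<close> by (simp add: t_def)
      next
        case False
        hence "t = (L + U) / 2" using \<open>Xp \<noteq> {}\<close> by (simp add: t_def)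
        moreover have "a \<le> L \<Longrightarrow> a < (L + U) / 2" for a using LU[OF \<open>Xp \<noteq> {}\<close> False] by (simp add: field_simps)
        ultimately show ?thesis using Lge[OF p] by metis
      qed
    qed
    have tU: "t < - s q / q m" if q: "q \<in> Xn" for q
    proof -
      have "Xn \<noteq> {}" using q by auto
      show ?thesis
      proof (cases "Xp = {}")
        case True then show ?thesis using Ule[OF q] \<open>Xn \<noteq> {}\<close> by (simp add: t_def)
      next
        case False
        hence "t = (L + U) / 2" using \<open>Xn \<noteq> {}\<close> by (simp add: t_def)
        moreover have "U \<le> a \<Longrightarrow> (L + U) / 2 < a" for a using LU[OF False \<open>Xn \<noteq> {}\<close>] by (simp add: field_simps)
        ultimately show ?thesis using Ule[OF q] by metis
      qed
    qed
    define y' where "y' = y(m := t)"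
    have sum': "(\<Sum>k\<in>insert m K. y' k * x k) = t * x m + s x" for x
      using insert.hyps by (auto simp: y'_def s_def intro!: sum.cong)
    have "\<forall>x\<in>X. 0 < (\<Sum>k\<in>insert m K. y' k * x k)"
    proof
      fix x assume x: "x \<in> X"
      consider "x m = 0" | "x m > 0" | "x m < 0" by linarith
      then show "0 < (\<Sum>k\<in>insert m K. y' k * x k)"
      proof cases
        case 1
        hence "x \<in> Y" using x by (auto simp: Y_def X0_def)
        then show ?thesis using y 1 by (simp add: sum' s_def)
      next
        case 2
        hence "- s x / x m < t" using tL x by (simp add: Xp_def)
        hence "- s x < t * x m" using pos_divide_less_eq[of "x m" "- s x" t] 2 by blast
        then show ?thesis by (simp add: sum')
      next
        case 3
        hence "t < - s x / x m" using tU x by (simp add: Xn_def)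
        hence "- s x < t * x m" using neg_less_divide_eq[of "x m" t "- s x"] 3 by blast
        then show ?thesis by (simp add: sum')
      qed
    qed
    then show ?thesis by blast
  qed
qed



lemma cube:
  fixes V :: "nat set \<Rightarrow> nat \<Rightarrow> real"
  assumes fK: "finite K" and cK: "card K < d"
    and VK: "\<forall>S T k. S \<subseteq> {1..d} \<longrightarrow> T \<subseteq> {1..d} \<longrightarrow> k \<notin> K \<longrightarrow> V S k = V T k"
  shows "\<exists>i\<in>{1..d}. \<exists>\<alpha> \<beta>. (\<forall>S. 0 \<le> \<alpha> S) \<and> (\<forall>S. 0 \<le> \<beta> S)
     \<and> sum \<alpha> {S. S \<subseteq> {1..d} \<and> i \<in> S} = 1 \<and> sum \<beta> {S. S \<subseteq> {1..d} \<and> i \<notin> S} = 1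
     \<and> (\<forall>k. (\<Sum>S\<in>{S. S \<subseteq> {1..d} \<and> i \<in> S}. \<alpha> S * V S k) = (\<Sum>S\<in>{S. S \<subseteq> {1..d} \<and> i \<notin> S}. \<beta> S * V S k))"
proof (rule ccontr)
  assume neg: "\<not> ?thesis"
  define D where "D = {1..d::nat}"
  define A where "A i = {S. S \<subseteq> D \<and> i \<in> S}" for i
  define B where "B i = {S. S \<subseteq> D \<and> i \<notin> S}" for i
  define u where "u S = (\<lambda>k. V S k - V (D - S) k)" for S
  have fA: "finite (A i)" for i
    by (rule finite_subset[of _ "Pow D"]) (auto simp: A_def D_def)
  have fB: "finite (B i)" for i
    by (rule finite_subset[of _ "Pow D"]) (auto simp: B_def D_def)
  have usupp: "u S k = 0" if "S \<subseteq> D" "k \<notin> K" for S k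
  proof -
    have "D - S \<subseteq> {1..d}" by (auto simp: D_def)
    moreover have "S \<subseteq> {1..d}" using that by (simp add: D_def)
    ultimately have "V S k = V (D - S) k" using VK that(2) by blast
    then show ?thesis by (simp add: u_def)
  qed
  have reidx: "(\<Sum>S\<in>B i. f (D - S)) = (\<Sum>T\<in>A i. f T)" if "i \<in> D" for i and f :: "nat set \<Rightarrow> real"
    by (rule sum.reindex_bij_witness[of _ "\<lambda>T. D - T" "\<lambda>S. D - S"]) (use that in \<open>auto simp: A_def B_def\<close>)
  have ex: "\<forall>i\<in>D. \<exists>y. \<forall>S\<in>A i. 0 < (\<Sum>k\<in>K. y k * u S k)"
  proof
    fix i assume i: "i \<in> D"
    have "finite (u ` A i)" using fA by simp
    moreover have "\<forall>x\<in>u ` A i. \<forall>k. k \<notin> K \<longrightarrow> x k = 0" using usupp by (auto simp: A_def)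
    ultimately have "(\<lambda>_. 0) \<in> conv (u ` A i) \<or> (\<exists>y. \<forall>x\<in>u ` A i. 0 < (\<Sum>k\<in>K. y k * x k))"
      using gordan[OF fK] by blast
    then show "\<exists>y. \<forall>S\<in>A i. 0 < (\<Sum>k\<in>K. y k * u S k)"
    proof
      assume "(\<lambda>_. 0) \<in> conv (u ` A i)"
      then obtain g where g: "\<forall>a\<in>A i. 0 \<le> g a" "sum g (A i) = 1" "\<forall>k. (\<Sum>a\<in>A i. g a * u a k) = 0"
        using conv_idx[OF _ fA] by blast
      define \<alpha> where "\<alpha> S = (if S \<in> A i then g S else 0)" for S
      define \<beta> where "\<beta> S = \<alpha> (D - S)" for S
      have a1: "\<forall>S. 0 \<le> \<alpha> S" using g by (simp add: \<alpha>_def)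
      have a2: "\<forall>S. 0 \<le> \<beta> S" using a1 by (simp add: \<beta>_def)
      have a3: "sum \<alpha> (A i) = 1" using g by (simp add: \<alpha>_def)
      have a4: "sum \<beta> (B i) = 1" using reidx[of i \<alpha>, OF i] a3 by (simp add: \<beta>_def)
      have a5: "(\<Sum>S\<in>A i. \<alpha> S * V S k) = (\<Sum>S\<in>B i. \<beta> S * V S k)" for k
      proof -
        have "(\<Sum>S\<in>B i. \<beta> S * V S k) = (\<Sum>S\<in>B i. \<alpha> (D - S) * V (D - (D - S)) k)"
          by (rule sum.cong) (auto simp: \<beta>_def B_def double_diff)
        also have "\<dots> = (\<Sum>T\<in>A i. \<alpha> T * V (D - T) k)" by (rule reidx[OF i])
        finally have "(\<Sum>S\<in>A i. \<alpha> S * V S k) - (\<Sum>S\<in>B i. \<beta> S * V S k) = (\<Sum>S\<in>A i. \<alpha> S * u S k)"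
          by (simp add: u_def sum_subtractf right_diff_distrib)
        also have "\<dots> = 0" using g(3) by (simp add: \<alpha>_def)
        finally show ?thesis by simp
      qed
      have "i \<in> {1..d}" using i by (simp add: D_def)
      moreover have "(\<forall>S. 0 \<le> \<alpha> S) \<and> (\<forall>S. 0 \<le> \<beta> S)
     \<and> sum \<alpha> {S. S \<subseteq> {1..d} \<and> i \<in> S} = 1 \<and> sum \<beta> {S. S \<subseteq> {1..d} \<and> i \<notin> S} = 1
     \<and> (\<forall>k. (\<Sum>S\<in>{S. S \<subseteq> {1..d} \<and> i \<in> S}. \<alpha> S * V S k) = (\<Sum>S\<in>{S. S \<subseteq> {1..d} \<and> i \<notin> S}. \<beta> S * V S k))"
        using a1 a2 a3 a4 a5 unfolding A_def B_def D_def by simp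
      ultimately have "\<exists>i\<in>{1..d}. \<exists>\<alpha> \<beta>. (\<forall>S. 0 \<le> \<alpha> S) \<and> (\<forall>S. 0 \<le> \<beta> S)
     \<and> sum \<alpha> {S. S \<subseteq> {1..d} \<and> i \<in> S} = 1 \<and> sum \<beta> {S. S \<subseteq> {1..d} \<and> i \<notin> S} = 1
     \<and> (\<forall>k. (\<Sum>S\<in>{S. S \<subseteq> {1..d} \<and> i \<in> S}. \<alpha> S * V S k) = (\<Sum>S\<in>{S. S \<subseteq> {1..d} \<and> i \<notin> S}. \<beta> S * V S k))"
        by blast
      with neg have False by (rule notE)
      then show ?thesis ..
    next
      assume "\<exists>y. \<forall>x\<in>u ` A i. 0 < (\<Sum>k\<in>K. y k * x k)"
      then show ?thesis by auto
    qed
  qed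
  obtain y where y0: "\<forall>i\<in>D. \<forall>S\<in>A i. 0 < (\<Sum>k\<in>K. y i k * u S k)"
    using bchoice[OF ex] by blast
  have y: "\<And>i S. i \<in> D \<Longrightarrow> S \<in> A i \<Longrightarrow> 0 < (\<Sum>k\<in>K. y i k * u S k)"
    using y0 by blast
  have yneg: "(\<Sum>k\<in>K. y i k * u S k) < 0" if "i \<in> D" "S \<in> B i" for i S
  proof -
    have "D - S \<in> A i" using that by (auto simp: A_def B_def)
    hence "0 < (\<Sum>k\<in>K. y i k * u (D - S) k)" using y that by blast
    moreover have "u (D - S) = (\<lambda>k. - u S k)" using that by (auto simp: u_def B_def double_diff)
    ultimately show ?thesis by (simp add: sum_negf)
  qed
  define yy where "yy i = (\<lambda>k. if k \<in> K then y i k else 0)" for i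
  have "card K < card D" using cK by (simp add: D_def)
  then obtain c where c: "\<exists>i\<in>D. c i \<noteq> 0" "\<forall>k. (\<Sum>i\<in>D. c i * yy i k) = 0"
    using dep_lemma[OF fK, of D yy] by (auto simp: D_def yy_def)
  define S0 where "S0 = {i\<in>D. c i > 0}"
  have "0 = (\<Sum>k\<in>K. (\<Sum>i\<in>D. c i * yy i k) * u S0 k)" using c(2) by simp
  also have "\<dots> = (\<Sum>k\<in>K. \<Sum>i\<in>D. c i * (y i k * u S0 k))"
    by (rule sum.cong[OF refl]) (simp add: sum_distrib_right yy_def mult.assoc)
  also have "\<dots> = (\<Sum>i\<in>D. \<Sum>k\<in>K. c i * (y i k * u S0 k))"
    by (rule sum.swap)
  also have "\<dots> = (\<Sum>i\<in>D. c i * (\<Sum>k\<in>K. y i k * u S0 k))"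
    by (simp add: sum_distrib_left)
  also have "\<dots> > 0"
  proof -
    have t: "0 < c i * (\<Sum>k\<in>K. y i k * u S0 k)" if "i \<in> D" "c i \<noteq> 0" for i
    proof (cases "c i > 0")
      case True
      hence "S0 \<in> A i" using that by (auto simp: S0_def A_def)
      then show ?thesis using y that True by simp
    next
      case False
      hence "c i < 0" using that by simp
      moreover have "S0 \<in> B i" using that False by (auto simp: S0_def B_def)
      ultimately show ?thesis using yneg that by (simp add: mult_neg_neg)
    qed
    obtain i0 where "i0 \<in> D" "c i0 \<noteq> 0" using c(1) by blast
    moreover have "\<forall>i\<in>D. 0 \<le> c i * (\<Sum>k\<in>K. y i k * u S0 k)"
      using t by (metis less_eq_real_def mult_zero_left)
    ultimately show ?thesis using t by (intro sum_pos2[of D i0]) (auto simp: D_def)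
  qed
  finally show False by simp
qed

definition lam :: "(nat \<Rightarrow> nat \<Rightarrow> real) \<Rightarrow> nat \<Rightarrow> real" where
  "lam x k = (x k 3 - x k 2) / (x k 3 - x k 1)"

definition dl :: "nat \<Rightarrow> nat \<Rightarrow> real" where
  "dl j = (\<lambda>j'. if j' = j then 1 else 0)"

definition rho :: "(nat \<Rightarrow> nat \<Rightarrow> real) \<Rightarrow> nat set \<Rightarrow> nat \<Rightarrow> nat \<Rightarrow> real" where
  "rho x S k = (if k \<in> S then (\<lambda>j. lam x k * dl 1 j + (1 - lam x k) * dl 3 j) else dl 2)"

definition Mp :: "nat \<Rightarrow> (nat \<Rightarrow> nat \<Rightarrow> real) \<Rightarrow> ((nat \<Rightarrow> nat) \<Rightarrow> nat \<Rightarrow> real)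
    \<Rightarrow> (nat \<Rightarrow> nat \<Rightarrow> real) \<Rightarrow> nat \<Rightarrow> real" where
  "Mp d x z r = (\<lambda>k. \<Sum>t\<in>tuples d. (\<Prod>l\<in>{1..d}. r l (t l)) * Ppt d x z t k)"

lemma three: "{1..3::nat} = {1,2,3}" by auto

lemma sum3: "(\<Sum>j\<in>{1..3::nat}. f j) = f 1 + f 2 + f 3"
  unfolding three by (simp add: add.assoc)

lemma sum3': "(\<Sum>j\<in>{Suc 0..3}. f j) = f 1 + f 2 + f 3"
  using sum3[of f] by simp

lemma fin_tuples: "finite (tuples d)"
  unfolding tuples_def by (rule finite_PiE) auto

lemma weight_sum: fixes r :: "nat \<Rightarrow> nat \<Rightarrow> real" shows "(\<Sum>t\<in>tuples d. \<Prod>l\<in>{1..d}. r l (t l)) = (\<Prod>l\<in>{1..d}. \<Sum>j\<in>{1..3}. r l j)"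
  unfolding tuples_def by (rule prod_sum_PiE[where A="{1..d}" and B="\<lambda>_. {1..3::nat}" and f=r, symmetric]) auto

lemma Mp_coord:
  assumes k: "k \<in> {1..d}" and one: "\<forall>l\<in>{1..d}. (\<Sum>j\<in>{1..3}. r l j) = 1"
  shows "Mp d x z r k = (\<Sum>j\<in>{1..3}. r k j * x k j)"
proof -
  define g where "g = r(k := (\<lambda>j. r k j * x k j))"
  have "Mp d x z r k = (\<Sum>t\<in>tuples d. \<Prod>l\<in>{1..d}. g l (t l))"
    unfolding Mp_def
  proof (rule sum.cong[OF refl])
    fix t assume "t \<in> tuples d"
    have "Ppt d x z t k = x k (t k)" using k by (simp add: Ppt_def)
    moreover have "(\<Prod>l\<in>{1..d}. g l (t l)) = g k (t k) * (\<Prod>l\<in>{1..d}-{k}. g l (t l))"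
      using k by (simp add: prod.remove)
    moreover have "(\<Prod>l\<in>{1..d}. r l (t l)) = r k (t k) * (\<Prod>l\<in>{1..d}-{k}. r l (t l))"
      using k by (simp add: prod.remove)
    moreover have "(\<Prod>l\<in>{1..d}-{k}. g l (t l)) = (\<Prod>l\<in>{1..d}-{k}. r l (t l))"
      by (rule prod.cong) (auto simp: g_def)
    ultimately show "(\<Prod>l\<in>{1..d}. r l (t l)) * Ppt d x z t k = (\<Prod>l\<in>{1..d}. g l (t l))"
      by (simp add: g_def)
  qed
  also have "\<dots> = (\<Prod>l\<in>{1..d}. \<Sum>j\<in>{1..3}. g l j)" by (rule weight_sum)
  also have "\<dots> = (\<Sum>j\<in>{1..3}. g k j) * (\<Prod>l\<in>{1..d}-{k}. \<Sum>j\<in>{1..3}. g l j)"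
    using k by (simp add: prod.remove)
  also have "(\<Prod>l\<in>{1..d}-{k}. \<Sum>j\<in>{1..3}. g l j) = 1"
    using one by (intro prod.neutral) (auto simp: g_def)
  finally show ?thesis by (simp add: g_def)
qed

lemma Mp_zero: assumes "k \<notin> {1..2*d-1}" shows "Mp d x z r k = 0"
proof -
  have "Ppt d x z t k = 0" for t using assms by (auto simp: Ppt_def)
  then show ?thesis by (simp add: Mp_def)
qed

lemma Mp_lin:
  assumes i: "i \<in> {1..d}" and ri: "r i = (\<lambda>j. a * r1 j + b * r3 j)"
  shows "Mp d x z r k = a * Mp d x z (r(i:=r1)) k + b * Mp d x z (r(i:=r3)) k"
proof -
  have "(\<Prod>l\<in>{1..d}. r l (t l)) * Ppt d x z t k =
      a * ((\<Prod>l\<in>{1..d}. (r(i:=r1)) l (t l)) * Ppt d x z t k) + b * ((\<Prod>l\<in>{1..d}. (r(i:=r3)) l (t l)) * Ppt d x z t k)" for t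
  proof -
    define P where "P = (\<Prod>l\<in>{1..d}-{i}. r l (t l))"
    have "(\<Prod>l\<in>{1..d}. r l (t l)) = r i (t i) * P"
      using i by (simp add: prod.remove P_def)
    moreover have "(\<Prod>l\<in>{1..d}. (r(i:=r1)) l (t l)) = r1 (t i) * P"
    proof -
      have "(\<Prod>l\<in>{1..d}. (r(i:=r1)) l (t l)) = (r(i:=r1)) i (t i) * (\<Prod>l\<in>{1..d}-{i}. (r(i:=r1)) l (t l))"
        using i by (simp add: prod.remove)
      also have "(\<Prod>l\<in>{1..d}-{i}. (r(i:=r1)) l (t l)) = P" unfolding P_def by (rule prod.cong) auto
      finally show ?thesis by simp
    qed
    moreover have "(\<Prod>l\<in>{1..d}. (r(i:=r3)) l (t l)) = r3 (t i) * P"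
    proof -
      have "(\<Prod>l\<in>{1..d}. (r(i:=r3)) l (t l)) = (r(i:=r3)) i (t i) * (\<Prod>l\<in>{1..d}-{i}. (r(i:=r3)) l (t l))"
        using i by (simp add: prod.remove)
      also have "(\<Prod>l\<in>{1..d}-{i}. (r(i:=r3)) l (t l)) = P" unfolding P_def by (rule prod.cong) auto
      finally show ?thesis by simp
    qed
    ultimately show ?thesis using ri by (simp add: algebra_simps)
  qed
  then show ?thesis unfolding Mp_def by (simp add: sum.distrib sum_distrib_left)
qed

lemma Mp_in_Aset:
  assumes i: "i \<in> {1..d}" and j: "j \<in> {1..3}" and nn: "\<forall>l\<in>{1..d}. \<forall>j'. 0 \<le> r l j'"
    and one: "\<forall>l\<in>{1..d}. (\<Sum>j'\<in>{1..3}. r l j') = 1" and ri: "r i = dl j"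
  shows "Mp d x z r \<in> Aset d x z i j"
proof -
  define T where "T = {t \<in> tuples d. t i = j}"
  define \<omega> where "\<omega> t = (\<Prod>l\<in>{1..d}. r l (t l))" for t :: "nat \<Rightarrow> nat"
  have fT: "finite T" using fin_tuples by (simp add: T_def)
  have z: "\<omega> t = 0" if "t \<in> tuples d - T" for t
    unfolding \<omega>_def
  proof (rule prod_zero)
    show "\<exists>a\<in>{1..d}. r a (t a) = 0" using that i ri by (intro bexI[of _ i]) (auto simp: T_def dl_def)
  qed simp
  have "Mp d x z r = (\<lambda>k. \<Sum>t\<in>T. \<omega> t * Ppt d x z t k)"
  proof
    fix k show "Mp d x z r k = (\<Sum>t\<in>T. \<omega> t * Ppt d x z t k)"
      unfolding Mp_def \<omega>_def[symmetric]
      by (rule sum.mono_neutral_right[OF fin_tuples]) (use z in \<open>auto simp: T_def\<close>)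
  qed
  moreover have "sum \<omega> T = 1"
  proof -
    have "sum \<omega> T = sum \<omega> (tuples d)"
      by (rule sum.mono_neutral_left[OF fin_tuples]) (use z in \<open>auto simp: T_def\<close>)
    also have "\<dots> = 1" unfolding \<omega>_def weight_sum using one by (intro prod.neutral) auto
    finally show ?thesis .
  qed
  moreover have "\<forall>t\<in>T. 0 \<le> \<omega> t" using nn by (auto simp: \<omega>_def intro!: prod_nonneg)
  ultimately show ?thesis unfolding Aset_def T_def[symmetric]
    using idx_conv[OF fT, of \<omega> "Ppt d x z"] by simp
qed

lemma lam_bounds:
  assumes "x k 1 < x k 2" "x k 2 < x k 3"
  shows "0 \<le> lam x k" "lam x k \<le> 1" "lam x k * x k 1 + (1 - lam x k) * x k 3 = x k 2"
proof -
  have p: "x k 3 - x k 1 > 0" using assms by simp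
  show "0 \<le> lam x k" using assms p by (simp add: lam_def)
  show "lam x k \<le> 1" using assms p by (simp add: lam_def divide_le_eq_1)
  have "lam x k * x k 1 + (1 - lam x k) * x k 3 = x k 3 - lam x k * (x k 3 - x k 1)"
    by (simp add: algebra_simps)
  also have "lam x k * (x k 3 - x k 1) = x k 3 - x k 2" using p by (simp add: lam_def)
  finally show "lam x k * x k 1 + (1 - lam x k) * x k 3 = x k 2" by simp
qed

theorem proposition5:
  fixes d :: nat
    and x :: "nat \<Rightarrow> nat \<Rightarrow> real"
    and z :: "(nat \<Rightarrow> nat) \<Rightarrow> nat \<Rightarrow> real"
  assumes "d \<ge> 1"
    and "\<forall>i\<in>{1..d}. x i 1 < x i 2 \<and> x i 2 < x i 3"
  shows "\<exists>i\<in>{1..d}. \<exists>a v. a \<in> Rn (2 * d - 1) \<and> v \<in> Rn (2 * d - 1) \<and> v \<noteq> (\<lambda>_. 0)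
           \<and> (\<forall>p\<in>line a v. \<forall>k\<in>{1..d} - {i}. p k = x k 2)
           \<and> (\<forall>j\<in>{1..3}. line a v \<inter> Aset d x z i j \<noteq> {})"
proof -
  define D where "D = {1..d}"
  define K where "K = {d+1..2*d-1}"
  have fK: "finite K" by (simp add: K_def)
  have cK: "card K < d" using assms(1) by (simp add: K_def)
  have xinc: "x k 1 < x k 2" "x k 2 < x k 3" if "k \<in> D" for k
    using assms(2) that by (auto simp: D_def)
  have DK: "k \<in> D \<or> k \<in> K \<or> k \<notin> {1..2*d-1}" for k by (auto simp: D_def K_def)
  define Q where "Q S = Mp d x z (rho x S)" for S
  have rho_nn: "0 \<le> rho x S l j" if "l \<in> D" for S l j
    using lam_bounds[of x l, OF xinc(1)[OF that] xinc(2)[OF that]] by (auto simp: rho_def dl_def)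
  have rho_one: "(\<Sum>j\<in>{1..3}. rho x S l j) = 1" for S l
    unfolding sum3 by (simp add: rho_def dl_def)
  have rho_mean: "(\<Sum>j\<in>{1..3}. rho x S l j * x l j) = x l 2" if "l \<in> D" for S l
  proof -
    have e: "lam x l * x l 1 + (1 - lam x l) * x l 3 = x l 2"
      using lam_bounds(3)[of x l, OF xinc(1)[OF that] xinc(2)[OF that]] .
    show ?thesis unfolding sum3 using e by (simp add: rho_def dl_def)
  qed
  have dl_one: "(\<Sum>j'\<in>{1..3}. dl j j') = 1" if "j \<in> {1..3}" for j
  proof -
    have "j = 1 \<or> j = 2 \<or> j = 3" using that by auto
    then show ?thesis unfolding sum3 by (auto simp: dl_def)
  qed
  have dl_mean: "(\<Sum>j'\<in>{1..3}. dl j j' * x l j') = x l j" if "j \<in> {1..3}" for j l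
  proof -
    have "j = 1 \<or> j = 2 \<or> j = 3" using that by auto
    then show ?thesis unfolding sum3 by (auto simp: dl_def)
  qed
  have Qconst: "\<forall>S T k. S \<subseteq> {1..d} \<longrightarrow> T \<subseteq> {1..d} \<longrightarrow> k \<notin> K \<longrightarrow> Q S k = Q T k"
  proof (intro allI impI)
    fix S T k assume "k \<notin> K"
    then consider "k \<in> D" | "k \<notin> {1..2*d-1}" using DK by blast
    then show "Q S k = Q T k"
    proof cases
      case 1
      have "Q S k = x k 2" unfolding Q_def
        using Mp_coord[of k d "rho x S" x z] 1 rho_one rho_mean[OF 1] by (simp add: D_def)
      moreover have "Q T k = x k 2" unfolding Q_def
        using Mp_coord[of k d "rho x T" x z] 1 rho_one rho_mean[OF 1] by (simp add: D_def)
      ultimately show ?thesis by simp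
    next
      case 2 then show ?thesis by (simp add: Q_def Mp_zero)
    qed
  qed
  obtain i \<alpha> \<beta> where i: "i \<in> {1..d}" and ab: "\<forall>S. 0 \<le> \<alpha> S" "\<forall>S. 0 \<le> \<beta> S"
     "sum \<alpha> {S. S \<subseteq> {1..d} \<and> i \<in> S} = 1" "sum \<beta> {S. S \<subseteq> {1..d} \<and> i \<notin> S} = 1"
     "\<forall>k. (\<Sum>S\<in>{S. S \<subseteq> {1..d} \<and> i \<in> S}. \<alpha> S * Q S k) = (\<Sum>S\<in>{S. S \<subseteq> {1..d} \<and> i \<notin> S}. \<beta> S * Q S k)"
    using cube[OF fK cK Qconst] by blast
  define A1 where "A1 = {S. S \<subseteq> {1..d} \<and> i \<in> S}"
  define A0 where "A0 = {S. S \<subseteq> {1..d} \<and> i \<notin> S}"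
  have fA1: "finite A1" by (rule finite_subset[of _ "Pow {1..d}"]) (auto simp: A1_def)
  have fA0: "finite A0" by (rule finite_subset[of _ "Pow {1..d}"]) (auto simp: A0_def)
  define R where "R j S = Mp d x z ((rho x S)(i := dl j))" for j S
  have iD: "i \<in> D" using i by (simp add: D_def)
  have R_in: "R j S \<in> Aset d x z i j" if "j \<in> {1..3}" for j S
    unfolding R_def
  proof (rule Mp_in_Aset[OF i that])
    show "\<forall>l\<in>{1..d}. \<forall>j'. 0 \<le> ((rho x S)(i := dl j)) l j'"
      using rho_nn by (auto simp: D_def dl_def)
    show "\<forall>l\<in>{1..d}. (\<Sum>j'\<in>{1..3}. ((rho x S)(i := dl j)) l j') = 1"
      using rho_one dl_one[OF that] by auto
  qed simp
  have R_coord: "R j S k = (if k = i then x k j else x k 2)" if "j \<in> {1..3}" "k \<in> D" for j S k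
  proof -
    have "R j S k = (\<Sum>j'\<in>{1..3}. ((rho x S)(i := dl j)) k j' * x k j')"
      unfolding R_def using that rho_one dl_one[OF that(1)] by (intro Mp_coord) (auto simp: D_def)
    then show ?thesis using dl_mean[OF that(1)] rho_mean[OF that(2)] by auto
  qed
  have R_zero: "R j S k = 0" if "k \<notin> {1..2*d-1}" for j S k
    using that by (simp add: R_def Mp_zero)
  define lm where "lm = lam x i"
  have lmb: "0 \<le> lm" "lm \<le> 1" "lm * x i 1 + (1 - lm) * x i 3 = x i 2"
    using lam_bounds[of x i, OF xinc(1)[OF iD] xinc(2)[OF iD]] by (auto simp: lm_def)
  have QA1: "Q S k = lm * R 1 S k + (1 - lm) * R 3 S k" if "S \<in> A1" for S k
  proof -
    have "rho x S i = (\<lambda>j. lm * dl 1 j + (1 - lm) * dl 3 j)" using that by (simp add: rho_def A1_def lm_def)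
    then show ?thesis unfolding Q_def R_def by (rule Mp_lin[OF i])
  qed
  have QA0: "Q S = R 2 S" if "S \<in> A0" for S
  proof -
    have "(rho x S)(i := dl 2) = rho x S" using that by (auto simp: rho_def A0_def)
    then show ?thesis by (simp add: Q_def R_def)
  qed
  define q1 where "q1 = (\<lambda>k. \<Sum>S\<in>A1. \<alpha> S * R 1 S k)"
  define q3 where "q3 = (\<lambda>k. \<Sum>S\<in>A1. \<alpha> S * R 3 S k)"
  define q2 where "q2 = (\<lambda>k. \<Sum>S\<in>A0. \<beta> S * R 2 S k)"
  have sA1: "sum \<alpha> A1 = 1" using ab(3) by (simp add: A1_def)
  have sA0: "sum \<beta> A0 = 1" using ab(4) by (simp add: A0_def)
  have q1A: "q1 \<in> Aset d x z i 1" unfolding q1_def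
    using conv_comb[OF fA1, of \<alpha> "R 1"] ab(1) sA1 R_in[of 1] by (simp add: Aset_def)
  have q3A: "q3 \<in> Aset d x z i 3" unfolding q3_def
    using conv_comb[OF fA1, of \<alpha> "R 3"] ab(1) sA1 R_in[of 3] by (simp add: Aset_def)
  have q2A: "q2 \<in> Aset d x z i 2" unfolding q2_def
    using conv_comb[OF fA0, of \<beta> "R 2"] ab(2) sA0 R_in[of 2] by (simp add: Aset_def)
  have avg: "\<And>c. (\<Sum>S\<in>A1. \<alpha> S * c) = c" using sA1 by (simp add: sum_distrib_right[symmetric])
  have q1c: "q1 k = (if k = i then x k 1 else x k 2)" if "k \<in> D" for k
    unfolding q1_def using R_coord[of 1 k] that avg by simp
  have q3c: "q3 k = (if k = i then x k 3 else x k 2)" if "k \<in> D" for k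
    unfolding q3_def using R_coord[of 3 k] that avg by simp
  have q2eq: "q2 k = lm * q1 k + (1 - lm) * q3 k" for k
  proof -
    have "q2 k = (\<Sum>S\<in>A0. \<beta> S * Q S k)" unfolding q2_def using QA0 by (auto intro!: sum.cong)
    also have "\<dots> = (\<Sum>S\<in>A1. \<alpha> S * Q S k)" unfolding A1_def A0_def using ab(5) by metis
    also have "\<dots> = (\<Sum>S\<in>A1. lm * (\<alpha> S * R 1 S k) + (1 - lm) * (\<alpha> S * R 3 S k))"
    proof (rule sum.cong[OF refl])
      fix S assume S: "S \<in> A1"
      show "\<alpha> S * Q S k = lm * (\<alpha> S * R 1 S k) + (1 - lm) * (\<alpha> S * R 3 S k)"
        by (subst QA1[OF S, of k]) (simp add: algebra_simps)
    qed
    also have "\<dots> = lm * q1 k + (1 - lm) * q3 k"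
      unfolding q1_def q3_def by (simp add: sum.distrib sum_distrib_left)
    finally show ?thesis .
  qed
  define v where "v = (\<lambda>k. q3 k - q1 k)"
  have q1R: "q1 \<in> Rn (2 * d - 1)" unfolding Rn_def q1_def using R_zero by simp
  have q3R: "q3 \<in> Rn (2 * d - 1)" unfolding Rn_def q3_def using R_zero by simp
  have vR: "v \<in> Rn (2 * d - 1)" using q1R q3R by (simp add: Rn_def v_def)
  have vnz: "v \<noteq> (\<lambda>_. 0)"
  proof
    assume "v = (\<lambda>_. 0)"
    hence "v i = 0" by simp
    moreover have "v i = x i 3 - x i 1" using q1c[OF iD] q3c[OF iD] by (simp add: v_def)
    ultimately show False using xinc[OF iD] by simp
  qed
  have online: "\<forall>p\<in>line q1 v. \<forall>k\<in>{1..d} - {i}. p k = x k 2"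
  proof (intro ballI)
    fix p k assume p: "p \<in> line q1 v" and k: "k \<in> {1..d} - {i}"
    then obtain s where "p = (\<lambda>k. q1 k + s * v k)" by (auto simp: line_def)
    moreover have "k \<in> D" "k \<noteq> i" using k by (auto simp: D_def)
    ultimately show "p k = x k 2" using q1c q3c by (simp add: v_def)
  qed
  have hit: "\<forall>j\<in>{1..3}. line q1 v \<inter> Aset d x z i j \<noteq> {}"
  proof
    fix j :: nat assume "j \<in> {1..3}"
    hence "j = 1 \<or> j = 2 \<or> j = 3" by auto
    then consider "j = 1" | "j = 2" | "j = 3" by blast
    then show "line q1 v \<inter> Aset d x z i j \<noteq> {}"
    proof cases
      case 1
      have "q1 = (\<lambda>k. q1 k + 0 * v k)" by simp
      hence "q1 \<in> line q1 v" unfolding line_def by blast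
      then show ?thesis using q1A 1 by blast
    next
      case 3
      have "q3 = (\<lambda>k. q1 k + 1 * v k)" by (simp add: v_def)
      hence "q3 \<in> line q1 v" unfolding line_def by blast
      then show ?thesis using q3A 3 by blast
    next
      case 2
      have "q2 = (\<lambda>k. q1 k + (1 - lm) * v k)" using q2eq by (auto simp: v_def algebra_simps)
      hence "q2 \<in> line q1 v" unfolding line_def by blast
      then show ?thesis using q2A 2 by blast
    qed
  qed
  show ?thesis using i q1R vR vnz online hit by blast
qed


end
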